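(* For any hypothesis class $\mathcal{H}$ with $|\mathcal{H}|<\infty$ and any integer $k\ge0$, \[ \mathrm{ELdim}(\mathcal{H},k)\le\max\Big\{t:\binom{t}{\le k+1}\le|\mathcal{H}|\Big\}. \]
   Context: Hypotheses are maps $\mathcal{X}\to\{-1,+1\}$; $\binom{t}{\le j}=\sum_{i=0}^{j}\binom{t}{i}$. Extended mistake tree w.r.t. $\mathcal{H}$: a finite full binary tree (possibly a single leaf) in which each internal node $v$ is labeled by $x_v\in\mathcal{X}$ and has two solid downward edges, to its left child (label $-1$) and right child (label $+1$), plus one dashed downward edge to one of its two children; each leaf is labeled by some $h\in\mathcal{H}$ with $h(x_v)$ equal to the direction label at every internal node $v$ on the root-to-leaf path. A root-to-leaf path chooses at each internal node one downward edge; its length is its number of edges. The tree is $(k,m)$-difficult if every root-to-leaf path using at most $k$ solid edges has length at least $m$. $\mathrm{ELdim}(\mathcal{H},k)$ is the supremum of $m$ such that a $(k,m)$-difficult extended mistake tree w.r.t. $\mathcal{H}$ exists. *)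

theory Defs
  imports Main "HOL-Library.Extended_Nat"
begin

definition hypothesis :: "('x \<Rightarrow> int) \<Rightarrow> bool" where
  "hypothesis h \<longleftrightarrow> (\<forall>x. h x \<in> {-1, 1})"

text \<open>A node carries its instance x_v, a flag telling
  to which child the dashed edge points (False = left child, True = right child),
  and its left child (label -1) and right child (label +1).\<close>

datatype ('x, 'h) etree =
    ELeaf 'h
  | ENode 'x bool "('x, 'h) etree" "('x, 'h) etree"

fun valid_etree :: "('x \<Rightarrow> int) set \<Rightarrow> ('x, 'x \<Rightarrow> int) etree \<Rightarrow> bool" where
  "valid_etree S (ELeaf h) = (h \<in> S)"
| "valid_etree S (ENode x d l r) =
     (valid_etree {h \<in> S. h x = -1} l \<and> valid_etree {h \<in> S. h x = 1} r)"

datatype edge = SolidL | SolidR | Dashed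

fun is_rtl_path :: "('x, 'h) etree \<Rightarrow> edge list \<Rightarrow> bool" where
  "is_rtl_path (ELeaf h) p = (p = [])"
| "is_rtl_path (ENode x d l r) [] = False"
| "is_rtl_path (ENode x d l r) (e # p) =
     (case e of SolidL \<Rightarrow> is_rtl_path l p
              | SolidR \<Rightarrow> is_rtl_path r p
              | Dashed \<Rightarrow> is_rtl_path (if d then r else l) p)"

definition num_solid :: "edge list \<Rightarrow> nat" where
  "num_solid p = length (filter (\<lambda>e. e \<noteq> Dashed) p)"

definition difficult :: "nat \<Rightarrow> nat \<Rightarrow> ('x, 'h) etree \<Rightarrow> bool" where
  "difficult k m t \<longleftrightarrow>
     (\<forall>p. is_rtl_path t p \<and> num_solid p \<le> k \<longrightarrow> m \<le> length p)"

definition ELdim :: "('x \<Rightarrow> int) set \<Rightarrow> nat \<Rightarrow> enat" where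
  "ELdim H k = Sup {enat m | m. \<exists>t. valid_etree H t \<and> difficult k m t}"

end

theory Submission
  imports Defs
begin

lemma pascal_sum:
  "(\<Sum>i\<le>Suc j. Suc m choose i) = (\<Sum>i\<le>Suc j. m choose i) + (\<Sum>i\<le>j. (m::nat) choose i)"
  by (induction j) (simp_all add: sum.atMost_Suc)

lemma sum_zero_choose: "(\<Sum>i\<le>k. (0::nat) choose i) = 1"
  by (induction k) simp_all

lemma valid_nonempty: "valid_etree S t \<Longrightarrow> finite S \<Longrightarrow> 1 \<le> card S"
proof (induction t arbitrary: S)
  case (ELeaf h)
  then have "card S > 0" by (auto simp: card_gt_0_iff)
  then show ?case by simp
next
  case (ENode x d l r)
  then have "1 \<le> card {h \<in> S. h x = -1}" by auto
  moreover have "card {h \<in> S. h x = -1} \<le> card S" using ENode.prems by (intro card_mono) auto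
  ultimately show ?case by simp
qed

lemma main_bound:
  "valid_etree S t \<Longrightarrow> finite S \<Longrightarrow> difficult k m t \<Longrightarrow> (\<Sum>i\<le>Suc k. m choose i) \<le> card S"
proof (induction t arbitrary: S k m)
  case (ELeaf h)
  have "m \<le> 0" using ELeaf.prems(3) unfolding difficult_def
    by (erule_tac x="[]" in allE) (simp add: num_solid_def)
  then show ?case using valid_nonempty[OF ELeaf.prems(1,2)] by (simp add: sum_zero_choose del: sum.atMost_Suc)
next
  case (ENode x d l r)
  let ?L = "{h \<in> S. h x = -1}" and ?R = "{h \<in> S. h x = 1}"
  have vl: "valid_etree ?L l" and vr: "valid_etree ?R r" using ENode.prems by auto
  have fl: "finite ?L" and fr: "finite ?R" using ENode.prems by auto
  have cS: "card ?L + card ?R \<le> card S"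
  proof -
    have "card ?L + card ?R = card (?L \<union> ?R)" using fl fr by (subst card_Un_disjoint) auto
    also have "\<dots> \<le> card S" using ENode.prems by (intro card_mono) auto
    finally show ?thesis .
  qed
  show ?case
  proof (cases m)
    case 0
    then show ?thesis using valid_nonempty[OF ENode.prems(1,2)] by (simp add: sum_zero_choose del: sum.atMost_Suc)
  next
    case (Suc m')
    have dif: "\<And>p. is_rtl_path (ENode x d l r) p \<Longrightarrow> num_solid p \<le> k \<Longrightarrow> Suc m' \<le> length p"
      using ENode.prems(3) Suc unfolding difficult_def by blast
    have dl_dash: "difficult k m' l" if "\<not> d"
      unfolding difficult_def
    proof (intro allI impI)
      fix p assume "is_rtl_path l p \<and> num_solid p \<le> k"
      then show "m' \<le> length p" using dif[of "Dashed # p"] that by (simp add: num_solid_def)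
    qed
    have dr_dash: "difficult k m' r" if "d"
      unfolding difficult_def
    proof (intro allI impI)
      fix p assume "is_rtl_path r p \<and> num_solid p \<le> k"
      then show "m' \<le> length p" using dif[of "Dashed # p"] that by (simp add: num_solid_def)
    qed
    have dl_sol: "difficult k' m' l" if "k = Suc k'" for k'
      unfolding difficult_def
    proof (intro allI impI)
      fix p assume "is_rtl_path l p \<and> num_solid p \<le> k'"
      then show "m' \<le> length p" using dif[of "SolidL # p"] that by (simp add: num_solid_def)
    qed
    have dr_sol: "difficult k' m' r" if "k = Suc k'" for k'
      unfolding difficult_def
    proof (intro allI impI)
      fix p assume "is_rtl_path r p \<and> num_solid p \<le> k'"
      then show "m' \<le> length p" using dif[of "SolidR # p"] that by (simp add: num_solid_def)
    qed
    have other: "(\<Sum>i\<le>k. m' choose i) \<le> card (if d then ?L else ?R)"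
    proof (cases k)
      case 0
      show ?thesis using 0 valid_nonempty[OF vl fl] valid_nonempty[OF vr fr] by simp
    next
      case (Suc k')
      show ?thesis using Suc ENode.IH(1)[OF vl fl dl_sol[OF Suc]] ENode.IH(2)[OF vr fr dr_sol[OF Suc]]
        by simp
    qed
    have dash: "(\<Sum>i\<le>Suc k. m' choose i) \<le> card (if d then ?R else ?L)"
    proof (cases d)
      case True
      then show ?thesis using ENode.IH(2)[OF vr fr dr_dash[OF True]] by simp
    next
      case False
      then show ?thesis using ENode.IH(1)[OF vl fl dl_dash[OF False]] by simp
    qed
    have "(\<Sum>i\<le>Suc k. m choose i) = (\<Sum>i\<le>Suc k. m' choose i) + (\<Sum>i\<le>k. m' choose i)"
      using Suc pascal_sum by simp
    also have "\<dots> \<le> card ?L + card ?R" using other dash by (cases d) auto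
    also have "\<dots> \<le> card S" by (rule cS)
    finally show ?thesis .
  qed
qed

theorem mainTheorem8:
  fixes H :: "('x \<Rightarrow> int) set" and k :: nat
  assumes "\<forall>h\<in>H. hypothesis h"
    and "finite H"
  shows "ELdim H k \<le> enat (GREATEST t. (\<Sum>i\<le>k+1. t choose i) \<le> card H)"
  unfolding ELdim_def
proof (rule Sup_least)
  fix y assume "y \<in> {enat m | m. \<exists>t. valid_etree H t \<and> difficult k m t}"
  then obtain m t where y: "y = enat m" and v: "valid_etree H t" and d: "difficult k m t" by auto
  have P: "(\<Sum>i\<le>k+1. m choose i) \<le> card H" using main_bound[OF v assms(2) d] by simp
  have bnd: "\<forall>t. (\<Sum>i\<le>k+1. t choose i) \<le> card H \<longrightarrow> t \<le> card H"
  proof (intro allI impI)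
    fix t assume a: "(\<Sum>i\<le>k+1. t choose i) \<le> card H"
    have "t = t choose 1" by simp
    also have "\<dots> \<le> (\<Sum>i\<le>k+1. t choose i)" by (rule member_le_sum) auto
    finally show "t \<le> card H" using a by simp
  qed
  have "m \<le> (GREATEST t. (\<Sum>i\<le>k+1. t choose i) \<le> card H)"
    using Greatest_le_nat[of "\<lambda>t. (\<Sum>i\<le>k+1. t choose i) \<le> card H", OF P] bnd by blast
  then show "y \<le> enat (GREATEST t. (\<Sum>i\<le>k+1. t choose i) \<le> card H)" using y by simp
qed

end
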